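(* Let $(X,\|\cdot\|)$ be a uniformly convex Banach space and let $\{v_n\}_{n\in\mathbb{N}}$ be a sequence of vectors in $X$ such that $\|v_{n+m}\|\le \|v_n+v_m\|$ for all $n,m\in\mathbb{N}$. Then the limit $\lim_{n\to\infty}\frac{v_n}{n}$ exists in $X$.
   Context: $\mathbb{N}=\{1,2,3,\dots\}$. A Banach space $X$ is uniformly convex if for every $\varepsilon>0$ there exists $\delta>0$ such that for all $u,v\in X$ with $\|u\|=\|v\|=1$ and $\|u-v\|\ge\varepsilon$ we have $\|u+v\|\le 2-\delta$. *)

theory Defs
  imports "HOL-Analysis.Analysis"
begin

definition uniformly_convex :: "'a::real_normed_vector itself \<Rightarrow> bool" where
  "uniformly_convex _ \<longleftrightarrow>
     (\<forall>\<epsilon>>0. \<exists>\<delta>>0. \<forall>u v :: 'a. norm u = 1 \<and> norm v = 1 \<and> norm (u - v) \<ge> \<epsilon>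
        \<longrightarrow> norm (u + v) \<le> 2 - \<delta>)"

end

theory Submission
  imports Defs
begin

lemma fekete_like:
  fixes A :: "nat \<Rightarrow> real"
  assumes nonneg: "\<And>n. A n \<ge> 0"
    and sub: "\<And>n m. n \<ge> 1 \<Longrightarrow> m \<ge> 1 \<Longrightarrow> A (n+m) \<le> A n + A m"
  defines "a \<equiv> Inf ((\<lambda>n. A n / real n) ` {1..})"
  shows fk1: "\<And>n. n \<ge> 1 \<Longrightarrow> real n * a \<le> A n"
    and fk2: "\<And>e. e > 0 \<Longrightarrow> \<exists>N\<ge>1. \<forall>n\<ge>N. A n \<le> real n * (a + e)"
    and fk3: "a \<ge> 0"
proof -
  have bdd: "bdd_below ((\<lambda>n. A n / real n) ` {1..})"
    by (rule bdd_belowI[where m=0]) (auto simp: nonneg)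
  show "real n * a \<le> A n" if "n \<ge> 1" for n
  proof -
    have "a \<le> A n / real n" unfolding a_def
      by (rule cInf_lower) (use that bdd in auto)
    then show ?thesis using that by (simp add: le_divide_eq mult.commute)
  qed
  show "a \<ge> 0" unfolding a_def
    by (rule cInf_greatest) (auto simp: nonneg)
  show "\<exists>N\<ge>1. \<forall>n\<ge>N. A n \<le> real n * (a + e)" if e: "e > 0" for e
  proof -
    have "Inf ((\<lambda>n. A n / real n) ` {1..}) < a + e/2" using e a_def by simp
    then obtain k where k1: "k \<ge> 1" and k: "A k / real k < a + e/2"
      using cInf_lessD[of "(\<lambda>n. A n / real n) ` {1..}"] by auto
    have L: "\<forall>r\<in>{1..k}. A (q*k + r) \<le> real q * A k + A r" for q
    proof (induction q)
      case 0 then show ?case by simp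
    next
      case (Suc q)
      show ?case
      proof
        fix r assume r: "r \<in> {1..k}"
        have "A (Suc q * k + r) = A ((q*k + r) + k)" by (simp add: algebra_simps)
        also have "\<dots> \<le> A (q*k+r) + A k" using r k1 by (intro sub) auto
        also have "\<dots> \<le> real q * A k + A r + A k" using Suc r by auto
        finally show "A (Suc q * k + r) \<le> real (Suc q) * A k + A r" by (simp add: algebra_simps)
      qed
    qed
    define M where "M = (\<Sum>r\<in>{1..k}. A r)"
    have AM: "A r \<le> M" if "r \<in> {1..k}" for r
      unfolding M_def by (rule member_le_sum) (use that nonneg in auto)
    obtain n0 :: nat where n0: "2 * M / e < real n0" using reals_Archimedean2 by blast
    define N where "N = max 1 (max k n0)"
    have "\<forall>n\<ge>N. A n \<le> real n * (a + e)"
    proof (intro allI impI)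
      fix n assume n: "N \<le> n"
      then have n1: "n \<ge> 1" and nk: "n \<ge> k" and nn0: "n \<ge> n0" unfolding N_def by auto
      define q where "q = (n - 1) div k"
      define r where "r = (n - 1) mod k + 1"
      have "n - 1 = q * k + (n - 1) mod k" unfolding q_def by simp
      then have nqr: "n = q * k + r" unfolding r_def using n1 by linarith
      have r: "r \<in> {1..k}" unfolding r_def using k1
        by (simp add: Suc_leI)
      have "A n = A (q*k+r)" using nqr by simp
      also have "\<dots> \<le> real q * A k + A r" using L[of q] r by blast
      also have "\<dots> \<le> real q * A k + M" using AM[OF r] by simp
      also have "real q * A k = real (q * k) * (A k / real k)" using k1 by simp
      also have "\<dots> \<le> real n * (a + e/2)"
      proof -
        have "real (q*k) \<le> real n" using nqr by simp
        moreover have "A k / real k \<le> a + e/2" using k by simp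
        moreover have "0 \<le> A k / real k" using nonneg by simp
        ultimately show ?thesis by (intro mult_mono) auto
      qed
      also have "M \<le> real n * (e/2)"
      proof -
        have "2 * M / e < real n" using n0 nn0 by linarith
        then show ?thesis using e by (simp add: field_simps)
      qed
      finally show "A n \<le> real n * (a + e)" by (simp add: algebra_simps)
    qed
    then show ?thesis unfolding N_def by (intro exI[of _ N]) (auto simp: N_def)
  qed
qed

theorem mainTheorem1:
  fixes v :: "nat \<Rightarrow> 'a::banach"
  assumes "uniformly_convex TYPE('a)"
    and "\<And>n m. n \<ge> 1 \<Longrightarrow> m \<ge> 1 \<Longrightarrow> norm (v (n + m)) \<le> norm (v n + v m)"
  shows "\<exists>L. (\<lambda>n. (1 / real n) *\<^sub>R v n) \<longlonglongrightarrow> L"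
proof -
  define A where "A n = norm (v n)" for n
  have nonneg: "\<And>n. A n \<ge> 0" unfolding A_def by simp
  have subv: "\<And>n m. n \<ge> 1 \<Longrightarrow> m \<ge> 1 \<Longrightarrow> A (n+m) \<le> norm (v n + v m)"
    using assms(2) unfolding A_def by blast
  have sub: "\<And>n m. n \<ge> 1 \<Longrightarrow> m \<ge> 1 \<Longrightarrow> A (n+m) \<le> A n + A m"
    using subv norm_triangle_ineq order_trans unfolding A_def by metis
  define a where "a = Inf ((\<lambda>n. A n / real n) ` {1..})"
  have F1: "\<And>n. n \<ge> 1 \<Longrightarrow> real n * a \<le> A n"
    using fk1[OF nonneg sub] unfolding a_def by blast
  have F2: "\<And>e. e > 0 \<Longrightarrow> \<exists>N\<ge>1. \<forall>n\<ge>N. A n \<le> real n * (a + e)"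
    using fk2[OF nonneg sub] unfolding a_def by blast
  have a0: "a \<ge> 0" using fk3[OF nonneg sub] unfolding a_def by blast
  have lima: "(\<lambda>n. A n / real n) \<longlonglongrightarrow> a"
  proof (rule LIMSEQ_I)
    fix r :: real assume r: "r > 0"
    then obtain N where N1: "N \<ge> 1" and HN: "\<forall>n\<ge>N. A n \<le> real n * (a + r/2)"
      using F2[of "r/2"] by auto
    have "norm (A n / real n - a) < r" if n: "n \<ge> N" for n
    proof -
      have n1: "n \<ge> 1" using n N1 by simp
      have "real n * a \<le> A n" "A n \<le> real n * (a + r/2)" using F1[OF n1] HN n by auto
      then have "a \<le> A n / real n" "A n / real n \<le> a + r/2" using n1
        by (simp_all add: field_simps)
      then show ?thesis using r by simp
    qed
    then show "\<exists>no. \<forall>n\<ge>no. norm (A n / real n - a) < r" by blast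
  qed
  show ?thesis
  proof (cases "a = 0")
    case True
    have "(\<lambda>n. norm ((1 / real n) *\<^sub>R v n)) \<longlonglongrightarrow> 0"
    proof -
      have "(\<lambda>n. norm ((1 / real n) *\<^sub>R v n)) = (\<lambda>n. A n / real n)"
        unfolding A_def by (auto simp: divide_simps)
      then show ?thesis using lima True by simp
    qed
    then have "(\<lambda>n. (1 / real n) *\<^sub>R v n) \<longlonglongrightarrow> 0"
      by (rule tendsto_norm_zero_cancel)
    then show ?thesis by blast
  next
    case False
    then have apos: "a > 0" using a0 by simp
    have Apos: "\<And>n. n \<ge> 1 \<Longrightarrow> A n > 0"
    proof -
      fix n :: nat assume n: "n \<ge> 1"
      have "real n * a > 0" using n apos by simp
      then show "A n > 0" using F1[OF n] by linarith
    qed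
    define d where "d n = (1 / A n) *\<^sub>R v n" for n
    have dnorm: "\<And>n. n \<ge> 1 \<Longrightarrow> norm (d n) = 1"
      using Apos unfolding d_def A_def by (simp add: less_imp_neq)
    have vd: "\<And>n. n \<ge> 1 \<Longrightarrow> v n = A n *\<^sub>R d n"
      using Apos unfolding d_def by (auto simp: A_def)
    have UC: "\<exists>\<delta>>0. \<forall>n m. n \<ge> 1 \<longrightarrow> m \<ge> 1 \<longrightarrow>
                 A n + A m - A (n+m) < min (A n) (A m) * \<delta> \<longrightarrow> norm (d n - d m) < e"
      if e: "e > 0" for e
    proof -
      obtain \<delta> where \<delta>: "\<delta> > 0" and H: "\<forall>u w::'a. norm u = 1 \<and> norm w = 1 \<and> norm (u - w) \<ge> e
          \<longrightarrow> norm (u + w) \<le> 2 - \<delta>"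
        using assms(1) e unfolding uniformly_convex_def by blast
      have "\<forall>n m. n \<ge> 1 \<longrightarrow> m \<ge> 1 \<longrightarrow>
                 A n + A m - A (n+m) < min (A n) (A m) * \<delta> \<longrightarrow> norm (d n - d m) < e"
      proof (intro allI impI)
        fix n m :: nat assume n: "n \<ge> 1" and m: "m \<ge> 1"
          and D: "A n + A m - A (n+m) < min (A n) (A m) * \<delta>"
        show "norm (d n - d m) < e"
        proof (rule ccontr)
          assume "\<not> norm (d n - d m) < e"
          then have s: "norm (d n + d m) \<le> 2 - \<delta>" using H dnorm[OF n] dnorm[OF m] by auto
          have key: "norm (v n + v m) \<le> A n + A m - min (A n) (A m) * \<delta>"
          proof (cases "A n \<le> A m")
            case True
            have eq: "v n + v m = A n *\<^sub>R (d n + d m) + (A m - A n) *\<^sub>R d m"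
              using vd[OF n] vd[OF m] by (simp add: algebra_simps)
            have "norm (v n + v m) \<le> norm (A n *\<^sub>R (d n + d m)) + norm ((A m - A n) *\<^sub>R d m)"
              unfolding eq by (rule norm_triangle_ineq)
            also have "\<dots> = A n * norm (d n + d m) + (A m - A n)"
              using True nonneg[of n] dnorm[OF m] by simp
            also have "\<dots> \<le> A n * (2 - \<delta>) + (A m - A n)"
              using s nonneg[of n] by (simp add: mult_left_mono)
            finally show ?thesis using True by (simp add: algebra_simps)
          next
            case False
            have eq: "v n + v m = A m *\<^sub>R (d n + d m) + (A n - A m) *\<^sub>R d n"
              using vd[OF n] vd[OF m] by (simp add: algebra_simps)
            have "norm (v n + v m) \<le> norm (A m *\<^sub>R (d n + d m)) + norm ((A n - A m) *\<^sub>R d n)"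
              unfolding eq by (rule norm_triangle_ineq)
            also have "\<dots> = A m * norm (d n + d m) + (A n - A m)"
              using False nonneg[of m] dnorm[OF n] by simp
            also have "\<dots> \<le> A m * (2 - \<delta>) + (A n - A m)"
              using s nonneg[of m] by (simp add: mult_left_mono)
            finally show ?thesis using False by (simp add: algebra_simps)
          qed
          then show False using subv[OF n m] D by linarith
        qed
      qed
      then show ?thesis using \<delta> by blast
    qed
    define D where "D x y = A x + A y - A (x + y)" for x y
    have Dnn: "\<And>x y. x \<ge> 1 \<Longrightarrow> y \<ge> 1 \<Longrightarrow> D x y \<ge> 0" unfolding D_def using sub by force
    have tel: "(\<Sum>j\<in>{1..<Suc k}. D n (j*n)) = real (Suc k) * A n - A (Suc k * n)" for n k
    proof (induction k)
      case 0 then show ?case by simp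
    next
      case (Suc k)
      have "(\<Sum>j\<in>{1..<Suc (Suc k)}. D n (j*n)) = (\<Sum>j\<in>{1..<Suc k}. D n (j*n)) + D n (Suc k * n)"
        by simp
      also have "\<dots> = (real (Suc k) * A n - A (Suc k * n)) + D n (Suc k * n)"
        using Suc.IH by simp
      also have "\<dots> = real (Suc (Suc k)) * A n - A (Suc (Suc k) * n)"
      proof -
        have "Suc (Suc k) * n = n + Suc k * n" by simp
        then show ?thesis unfolding D_def by (simp add: algebra_simps)
      qed
      finally show ?case .
    qed
    have C: "Cauchy d"
    proof (rule metric_CauchyI)
      fix e :: real assume e: "e > 0"
      obtain \<delta> where \<delta>: "\<delta> > 0" and Hd: "\<forall>n m. n \<ge> 1 \<longrightarrow> m \<ge> 1 \<longrightarrow>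
                 A n + A m - A (n+m) < min (A n) (A m) * \<delta> \<longrightarrow> norm (d n - d m) < e/2"
        using UC[of "e/2"] e by auto
      define \<eta> where "\<eta> = a * \<delta> / 6"
      have \<eta>: "\<eta> > 0" unfolding \<eta>_def using apos \<delta> by simp
      obtain N where N1: "N \<ge> 1" and HN: "\<forall>n\<ge>N. A n \<le> real n * (a + \<eta>)"
        using F2[OF \<eta>] by auto
      have main: "norm (d n - d m) < e" if nN: "N \<le> n" and nm: "n \<le> m" for n m
      proof -
        have n1: "n \<ge> 1" and m1: "m \<ge> 1" using nN nm N1 by auto
        define J where "J = m div n + 1"
        have J1: "J \<ge> 1" unfolding J_def by simp
        have dm1: "m div n * n + m mod n = m" by simp
        have dm2: "m mod n < n" using n1 by simp
        have JnE: "J * n = m div n * n + n" unfolding J_def by (simp add: algebra_simps)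
        have mJ: "m < J * n" using dm1 dm2 JnE by linarith
        have Jm: "J * n \<le> 2 * m" using dm1 JnE nm by linarith
        have gn: "A n - real n * a \<le> real n * \<eta>" using HN nN by (simp add: algebra_simps)
        have sumle: "(\<Sum>j\<in>{J..<2*J}. D n (j*n)) \<le> real (2*J) * (real n * \<eta>)"
        proof -
          have "(\<Sum>j\<in>{J..<2*J}. D n (j*n)) \<le> (\<Sum>j\<in>{1..<Suc (2*J - 1)}. D n (j*n))"
            by (rule sum_mono2) (use J1 n1 Dnn in auto)
          also have "\<dots> = real (2*J) * A n - A (2*J * n)" 
          proof -
            have e2: "Suc (2*J - 1) = 2*J" using J1 by simp
            show ?thesis using tel[of n "2*J - 1"] unfolding e2 .
          qed
          also have "\<dots> \<le> real (2*J) * A n - real (2*J*n) * a" using F1[of "2*J*n"] J1 n1 by simp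
          also have "\<dots> = real (2*J) * (A n - real n * a)" by (simp add: algebra_simps)
          also have "\<dots> \<le> real (2*J) * (real n * \<eta>)" using gn by (intro mult_left_mono) auto
          finally show ?thesis .
        qed
        have "\<exists>j\<in>{J..<2*J}. D n (j*n) \<le> 2 * (real n * \<eta>)"
        proof (rule ccontr)
          assume "\<not> ?thesis"
          then have "\<forall>j\<in>{J..<2*J}. 2 * (real n * \<eta>) < D n (j*n)" by auto
          then have "(\<Sum>j\<in>{J..<2*J}. 2 * (real n * \<eta>)) < (\<Sum>j\<in>{J..<2*J}. D n (j*n))"
            using J1 by (intro sum_strict_mono) auto
          moreover have "(\<Sum>j\<in>{J..<2*J}. 2 * (real n * \<eta>)) = real J * (2 * (real n * \<eta>))"
            by simp
          ultimately show False using sumle by (simp add: algebra_simps)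
        qed
        then obtain j where j: "j \<in> {J..<2*J}" and Dj: "D n (j*n) \<le> 2 * (real n * \<eta>)" by blast
        define p where "p = j * n"
        have mp: "m < p" unfolding p_def using j mJ
          by (meson atLeastLessThan_iff less_le_trans mult_le_mono1)
        have p4: "p \<le> 4 * m"
        proof -
          have "j * n \<le> 2 * J * n" using j by simp
          then show ?thesis unfolding p_def using Jm by linarith
        qed
        have p1: "p \<ge> 1" using mp m1 by simp
        have Ap: "real p * a \<le> A p" using F1[OF p1] .
        have An: "real n * a \<le> A n" using F1[OF n1] .
        have Am: "real m * a \<le> A m" using F1[OF m1] .
        have pn: "real n \<le> real p" "real m \<le> real p" using mp nm by auto
        have "real n * a \<le> real p * a" using pn apos by (simp add: mult_right_mono)
        have "real m * a \<le> real p * a" using pn apos by (simp add: mult_right_mono)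
        have "min (A n) (A p) * \<delta> \<ge> real n * a * \<delta>"
          using An Ap \<open>real n * a \<le> real p * a\<close> \<delta> by (simp add: mult_right_mono)
        moreover have "2 * (real n * \<eta>) < real n * a * \<delta>"
          unfolding \<eta>_def using n1 apos \<delta> by (simp add: field_simps)
        ultimately have "A n + A p - A (n+p) < min (A n) (A p) * \<delta>"
          using Dj unfolding D_def p_def by linarith
        then have c1: "norm (d n - d p) < e/2" using Hd n1 p1 by blast
        have "min (A m) (A p) * \<delta> \<ge> real m * a * \<delta>"
          using Am Ap \<open>real m * a \<le> real p * a\<close> \<delta> by (simp add: mult_right_mono)
        moreover have "A m + A p - A (m+p) \<le> (real m + real p) * \<eta>"
        proof -
          have "A m \<le> real m * (a + \<eta>)" using HN nN nm by simp
          moreover have "A p \<le> real p * (a + \<eta>)" using HN nN nm mp by simp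
          moreover have "real (m+p) * a \<le> A (m+p)" using F1[of "m+p"] m1 by simp
          ultimately show ?thesis by (simp add: algebra_simps)
        qed
        moreover have "(real m + real p) * \<eta> < real m * a * \<delta>"
        proof -
          have "(real m + real p) * \<eta> \<le> (5 * real m) * \<eta>" using p4 \<eta>
            by (intro mult_right_mono) auto
          also have "\<dots> < real m * a * \<delta>" unfolding \<eta>_def using m1 apos \<delta> by (simp add: field_simps)
          finally show ?thesis .
        qed
        ultimately have "A m + A p - A (m+p) < min (A m) (A p) * \<delta>" by linarith
        then have c2: "norm (d m - d p) < e/2" using Hd m1 p1 by blast
        have "norm (d n - d m) \<le> norm (d n - d p) + norm (d m - d p)"
          using norm_triangle_ineq4[of "d n - d p" "d m - d p"] by simp
        then show ?thesis using c1 c2 by linarith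
      qed
      show "\<exists>M. \<forall>m\<ge>M. \<forall>n\<ge>M. dist (d m) (d n) < e"
      proof (intro exI[of _ N] allI impI)
        fix m n assume m: "N \<le> m" and n: "N \<le> n"
        show "dist (d m) (d n) < e"
        proof (cases "m \<le> n")
          case True then show ?thesis using main[OF m True] by (simp add: dist_norm)
        next
          case False then show ?thesis using main[OF n] by (simp add: dist_norm norm_minus_commute)
        qed
      qed
    qed
    then obtain L where L: "d \<longlonglongrightarrow> L" using Cauchy_convergent_iff convergent_def by blast
    have "(\<lambda>n. (A n / real n) *\<^sub>R d n) \<longlonglongrightarrow> a *\<^sub>R L" using lima L by (rule tendsto_scaleR)
    moreover have "eventually (\<lambda>n. (A n / real n) *\<^sub>R d n = (1 / real n) *\<^sub>R v n) sequentially"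
    proof (rule eventually_sequentiallyI[of 1])
      fix n :: nat assume n: "n \<ge> 1"
      show "(A n / real n) *\<^sub>R d n = (1 / real n) *\<^sub>R v n"
        using Apos[OF n] unfolding d_def by (simp add: less_imp_neq)
    qed
    ultimately have "(\<lambda>n. (1 / real n) *\<^sub>R v n) \<longlonglongrightarrow> a *\<^sub>R L" by (rule Lim_transform_eventually)
    then show ?thesis by blast
  qed
qed

end
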